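(* If a (possibly randomized) adversarial no-regret algorithm satisfies $R_i(T)\le B$ with probability $1-\delta$ against any adversary, then with probability $1-\delta$ it also satisfies $R_i(t)\le B$ simultaneously for all $t\le T$, against any adversary.
   Context: Online learning: at each timestep $t$ the learner picks a strategy $\mathbf{x}^t$ from a compact convex set $\mathcal{X}\subset\mathbb{R}^m$ (or an action sampled from it) and an adaptive adversary picks a bounded linear utility vector $\mathbf{u}^t$. $R_i(t)$ denotes the learner's regret after the first $t$ timesteps, i.e. $\max_{\mathbf{x}\in\mathcal{X}}\sum_{\tau=1}^t\langle\mathbf{u}^\tau,\mathbf{x}-\mathbf{x}^\tau\rangle$ (or its realized-action analogue). The adversary is allowed to choose the zero utility vector. *)

theory Defs
  imports "HOL-Probability.Probability"
begin

text \<open>The learner's randomness is a seed w drawn once from a probability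
space.\<close>

fun play :: "('w \<Rightarrow> 'v list \<Rightarrow> 'v) \<Rightarrow> ('v list \<Rightarrow> 'v) \<Rightarrow> 'w \<Rightarrow> nat \<Rightarrow> ('v \<times> 'v) list" where
  "play L A w 0 = []"
| "play L A w (Suc t) =
     (let h = play L A w t in h @ [(L w (map snd h), A (map fst h))])"

definition regret :: "('v::real_inner) set \<Rightarrow> ('v \<times> 'v) list \<Rightarrow> real" where
  "regret X h = (SUP x\<in>X. (\<Sum>p\<leftarrow>h. inner (snd p) (x - fst p)))"

end

theory Submission
  imports Defs
begin

definition hist :: "('v list \<Rightarrow> 'v) \<Rightarrow> 'v list \<Rightarrow> nat \<Rightarrow> ('v \<times> 'v) list" where
  "hist A xs i = zip (take i xs) (map (\<lambda>m. A (take m xs)) [0..<i])"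

lemma length_play[simp]: "length (play L A w t) = t"
  by (induction t) (simp_all add: Let_def)

lemma take_play: "i \<le> j \<Longrightarrow> take i (play L A w j) = play L A w i"
proof (induction j)
  case 0 then show ?case by simp
next
  case (Suc j)
  show ?case
  proof (cases "i = Suc j")
    case True then show ?thesis by (simp del: play.simps)
  next
    case False then have "i \<le> j" using Suc.prems by simp
    then show ?thesis using Suc.IH by (simp add: Let_def)
  qed
qed

lemma nth_play: "m < j \<Longrightarrow> play L A w j ! m =
   (L w (map snd (play L A w m)), A (map fst (play L A w m)))"
proof (induction j)
  case 0 then show ?case by simp
next
  case (Suc j)
  show ?case
  proof (cases "m = j")
    case True then show ?thesis by (simp add: Let_def nth_append)
  next
    case False then have "m < j" using Suc.prems by simp
    then show ?thesis using Suc.IH by (simp add: Let_def nth_append)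
  qed
qed

lemma hist_play: "i \<le> j \<Longrightarrow> hist A (map fst (play L A w j)) i = play L A w i"
proof (rule nth_equalityI)
  assume ij: "i \<le> j"
  show "length (hist A (map fst (play L A w j)) i) = length (play L A w i)"
    using ij by (simp add: hist_def)
  fix m assume "m < length (hist A (map fst (play L A w j)) i)"
  then have m: "m < i" using ij by (simp add: hist_def)
  have t: "take m (map fst (play L A w j)) = map fst (play L A w m)"
    using m ij by (simp add: take_map take_play)
  show "hist A (map fst (play L A w j)) i ! m = play L A w i ! m"
    using m ij t by (simp add: hist_def nth_play)
qed

lemma hist_take: "hist A (take k xs) k = hist A xs k"
proof -
  have e: "map (\<lambda>m. A (take (min m k) xs)) [0..<k] = map (\<lambda>m. A (take m xs)) [0..<k]"
    by (rule map_cong) (auto simp: min_def)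
  show ?thesis by (simp only: hist_def take_take min.idem e)
qed

lemma regret_snoc0: "regret X (h @ [(x, 0)]) = regret X h"
  by (simp add: regret_def)

theorem proposition3p1:
  fixes X U :: "(real^'m) set"
    and M :: "'w measure"
    and L :: "'w \<Rightarrow> (real^'m) list \<Rightarrow> real^'m"
    and B \<delta> :: real
    and T :: nat
  assumes "prob_space M"
    and "compact X" and "convex X" and "X \<noteq> {}"
    and "bounded U" and "0 \<in> U"
    and "\<forall>w\<in>space M. \<forall>us. L w us \<in> X"
    and "\<forall>A. (\<forall>xs. A xs \<in> U) \<longrightarrow>
           (\<exists>E\<in>sets M. measure M E \<ge> 1 - \<delta> \<and>
              (\<forall>w\<in>E. regret X (play L A w T) \<le> B))"
  shows "\<forall>A. (\<forall>xs. A xs \<in> U) \<longrightarrow>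
           (\<exists>E\<in>sets M. measure M E \<ge> 1 - \<delta> \<and>
              (\<forall>w\<in>E. \<forall>t\<in>{1..T}. regret X (play L A w t) \<le> B))"
proof (intro allI impI)
  fix A :: "(real^'m) list \<Rightarrow> real^'m"
  assume AU: "\<forall>xs. A xs \<in> U"
  define stopped where "stopped xs \<longleftrightarrow> (\<exists>k\<le>length xs. regret X (hist A xs k) > B)"
    for xs :: "(real^'m) list"
  define A' where "A' xs = (if stopped xs then 0 else A xs)" for xs
  have A'U: "\<forall>xs. A' xs \<in> U" using AU assms(6) by (simp add: A'_def)
  then obtain E where E: "E \<in> sets M" "measure M E \<ge> 1 - \<delta>"
    "\<forall>w\<in>E. regret X (play L A' w T) \<le> B" using assms(8) by blast
  show "\<exists>E\<in>sets M. measure M E \<ge> 1 - \<delta> \<and>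
              (\<forall>w\<in>E. \<forall>t\<in>{1..T}. regret X (play L A w t) \<le> B)"
  proof (intro bexI conjI ballI)
    show "E \<in> sets M" "measure M E \<ge> 1 - \<delta>" using E by auto
    fix w t assume wE: "w \<in> E" and t: "t \<in> {1..T}"
    show "regret X (play L A w t) \<le> B"
    proof (rule ccontr)
      assume nt: "\<not> ?thesis"
      then have ex: "\<exists>k. regret X (play L A w k) > B" by (meson not_le)
      define k where "k = (LEAST k. regret X (play L A w k) > B)"
      have kB: "regret X (play L A w k) > B" unfolding k_def by (rule LeastI_ex[OF ex])
      have kt: "k \<le> t" unfolding k_def using nt by (intro Least_le) simp
      have kmin: "\<And>i. i < k \<Longrightarrow> regret X (play L A w i) \<le> B"
        unfolding k_def using not_less_Least by fastforce
      have same: "j \<le> k \<Longrightarrow> play L A' w j = play L A w j" for j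
      proof (induction j)
        case 0 then show ?case by simp
      next
        case (Suc j)
        then have IH: "play L A' w j = play L A w j" by simp
        have "\<not> stopped (map fst (play L A w j))"
        proof
          assume "stopped (map fst (play L A w j))"
          then obtain i where "i \<le> j" "regret X (hist A (map fst (play L A w j)) i) > B"
            unfolding stopped_def by auto
          then have "regret X (play L A w i) > B" using hist_play by metis
          moreover have "i < k" using \<open>i \<le> j\<close> Suc.prems by simp
          ultimately show False using kmin by fastforce
        qed
        then have "A' (map fst (play L A' w j)) = A (map fst (play L A w j))"
          using IH by (simp add: A'_def)
        then show ?case using IH by (simp add: Let_def)
      qed
      have later: "k \<le> j \<Longrightarrow> regret X (play L A' w j) = regret X (play L A w k)" for j
      proof (induction j)
        case 0 then show ?case using same by simp
      next
        case (Suc j)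
        show ?case
        proof (cases "k = Suc j")
          case True then show ?thesis using same[of k] by (simp del: play.simps)
        next
          case False
          then have kj: "k \<le> j" using Suc.prems by simp
          have tk: "take k (map fst (play L A' w j)) = map fst (play L A w k)"
            using kj same by (simp add: take_map take_play)
          have "hist A (map fst (play L A' w j)) k = play L A w k"
            using hist_take[of A k "map fst (play L A' w j)"] tk hist_play[of k k A L w]
            by simp
          then have "stopped (map fst (play L A' w j))"
            unfolding stopped_def using kj kB by (intro exI[of _ k]) simp
          then have "play L A' w (Suc j) = play L A' w j @ [(L w (map snd (play L A' w j)), 0)]"
            by (simp add: Let_def A'_def)
          then show ?thesis using Suc.IH kj regret_snoc0 by metis
        qed
      qed
      have "k \<le> T" using kt t by simp
      then have "regret X (play L A' w T) > B" using later kB by simp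
      then show False using E(3) wE by fastforce
    qed
  qed
qed

end
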